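(* Let $I\subset\mathbb{R}$ be an interval and let $M,N\colon I^2\to I$ be continuous means such that $(M,N)$ is weakly contractive. Then there exists a unique mean $K\colon I^2\to I$ which is $(M,N)$-invariant, and the sequence of iterates $\big((M,N)^n\big)_{n\in\mathbb{N}}$ converges to $(K,K)$ uniformly on compact subsets of $I^2$.
   Context: A function $K\colon I^2\to\mathbb{R}$ is a mean in $I$ if $\min(x,y)\le K(x,y)\le\max(x,y)$ for all $x,y\in I$. $(M_n,N_n):=(M,N)^n$ denotes the $n$-th iterate of the map $(x,y)\mapsto(M(x,y),N(x,y))$. $(M,N)$ is weakly contractive if for all $x,y\in I$ with $x\ne y$ there exists a positive integer $n$ with $|M_n(x,y)-N_n(x,y)|<|x-y|$. A mean $K$ is $(M,N)$-invariant if $K(M(x,y),N(x,y))=K(x,y)$ for all $x,y\in I$. *)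

theory Defs
  imports "HOL-Analysis.Analysis"
begin

definition is_mean :: "real set \<Rightarrow> (real \<Rightarrow> real \<Rightarrow> real) \<Rightarrow> bool" where
  "is_mean I K \<longleftrightarrow> (\<forall>x\<in>I. \<forall>y\<in>I. min x y \<le> K x y \<and> K x y \<le> max x y)"

definition MN_iter :: "(real \<Rightarrow> real \<Rightarrow> real) \<Rightarrow> (real \<Rightarrow> real \<Rightarrow> real) \<Rightarrow> nat \<Rightarrow> real \<times> real \<Rightarrow> real \<times> real" where
  "MN_iter M N n = ((\<lambda>(x, y). (M x y, N x y)) ^^ n)"

definition weakly_contractive :: "real set \<Rightarrow> (real \<Rightarrow> real \<Rightarrow> real) \<Rightarrow> (real \<Rightarrow> real \<Rightarrow> real) \<Rightarrow> bool" where
  "weakly_contractive I M N \<longleftrightarrow>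
     (\<forall>x\<in>I. \<forall>y\<in>I. x \<noteq> y \<longrightarrow>
        (\<exists>n. n > 0 \<and> \<bar>fst (MN_iter M N n (x, y)) - snd (MN_iter M N n (x, y))\<bar> < \<bar>x - y\<bar>))"

definition invariant_mean :: "real set \<Rightarrow> (real \<Rightarrow> real \<Rightarrow> real) \<Rightarrow> (real \<Rightarrow> real \<Rightarrow> real) \<Rightarrow> (real \<Rightarrow> real \<Rightarrow> real) \<Rightarrow> bool" where
  "invariant_mean I M N K \<longleftrightarrow> (\<forall>x\<in>I. \<forall>y\<in>I. K (M x y) (N x y) = K x y)"

end

theory Submission imports Defs begin

lemma dini_aux:
  fixes d :: "nat \<Rightarrow> 'a::metric_space \<Rightarrow> real"
  assumes C: "compact C" "C \<subseteq> S"
    and cont: "\<And>n. continuous_on S (d n)"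
    and dec: "\<And>z n. z \<in> S \<Longrightarrow> d (Suc n) z \<le> d n z"
    and lim: "\<And>z. z \<in> S \<Longrightarrow> (\<lambda>n. d n z) \<longlonglongrightarrow> 0"
    and e: "e > 0"
  shows "\<exists>N. \<forall>n\<ge>N. \<forall>z\<in>C. d n z < e"
proof -
  have "\<forall>z\<in>C. \<exists>m. d m z < e/2"
  proof
    fix z assume "z \<in> C"
    then have "z \<in> S" using C by auto
    from tendstoD[OF lim[OF this], of "e/2"] e have "\<forall>\<^sub>F n in sequentially. dist (d n z) 0 < e/2"
      by simp
    then obtain N where "\<forall>n\<ge>N. dist (d n z) 0 < e/2" by (auto simp: eventually_sequentially)
    then have "dist (d N z) 0 < e/2" by simp
    then have "d N z < e/2" by (auto simp: dist_real_def)
    then show "\<exists>m. d m z < e/2" by blast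
  qed
  then obtain m where m: "\<And>z. z \<in> C \<Longrightarrow> d (m z) z < e/2" by metis
  have "\<forall>z\<in>C. \<exists>\<delta>>0. \<forall>w\<in>S. dist w z < \<delta> \<longrightarrow> dist (d (m z) w) (d (m z) z) < e/2"
  proof
    fix z assume "z \<in> C"
    then have "z \<in> S" using C by auto
    with cont[of "m z"] e show "\<exists>\<delta>>0. \<forall>w\<in>S. dist w z < \<delta> \<longrightarrow> dist (d (m z) w) (d (m z) z) < e/2"
      unfolding continuous_on_iff by (meson half_gt_zero)
  qed
  then obtain \<delta> where \<delta>: "\<And>z. z \<in> C \<Longrightarrow> \<delta> z > 0"
    "\<And>z w. z \<in> C \<Longrightarrow> w \<in> S \<Longrightarrow> dist w z < \<delta> z \<Longrightarrow> dist (d (m z) w) (d (m z) z) < e/2"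
    by metis
  have "C \<subseteq> (\<Union>z\<in>C. ball z (\<delta> z))" using \<delta>(1) by force
  then obtain C' where C': "C' \<subseteq> C" "finite C'" "C \<subseteq> (\<Union>z\<in>C'. ball z (\<delta> z))"
    using compactE_image[OF C(1), of C "\<lambda>z. ball z (\<delta> z)"] by auto
  show ?thesis
  proof (intro exI allI impI ballI)
    fix n z assume n: "n \<ge> Max (m ` C')" and z: "z \<in> C"
    then obtain w where w: "w \<in> C'" "z \<in> ball w (\<delta> w)" using C' by auto
    have zS: "z \<in> S" using z C by auto
    have "m w \<le> Max (m ` C')" using w C' by auto
    then have "m w \<le> n" using n by linarith
    then have "d n z \<le> d (m w) z"
      using lift_Suc_antimono_le[of "\<lambda>k. d k z", OF dec[OF zS]] by blast
    also have "\<dots> < d (m w) w + e/2"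
    proof -
      have "w \<in> C" using w C' by auto
      then have "\<bar>d (m w) z - d (m w) w\<bar> < e/2"
        using \<delta>(2)[of w z] w zS by (auto simp: dist_commute dist_real_def abs_minus_commute)
      then show ?thesis by linarith
    qed
    also have "\<dots> < e" using m[of w] w C' by auto
    finally show "d n z < e" .
  qed
qed

theorem mainTheorem5:
  fixes I :: "real set" and M N :: "real \<Rightarrow> real \<Rightarrow> real"
  assumes "is_interval I"
    and "\<forall>x\<in>I. \<forall>y\<in>I. M x y \<in> I \<and> N x y \<in> I"
    and "is_mean I M" and "is_mean I N"
    and "continuous_on (I \<times> I) (\<lambda>(x, y). M x y)"
    and "continuous_on (I \<times> I) (\<lambda>(x, y). N x y)"
    and "weakly_contractive I M N"
  shows "\<exists>K. is_mean I K \<and> (\<forall>x\<in>I. \<forall>y\<in>I. K x y \<in> I) \<and> invariant_mean I M N K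
            \<and> (\<forall>K'. is_mean I K' \<and> (\<forall>x\<in>I. \<forall>y\<in>I. K' x y \<in> I) \<and> invariant_mean I M N K'
                    \<longrightarrow> (\<forall>x\<in>I. \<forall>y\<in>I. K' x y = K x y))
            \<and> (\<forall>C. compact C \<and> C \<subseteq> I \<times> I \<longrightarrow>
                 uniform_limit C (\<lambda>n. MN_iter M N n) (\<lambda>(x, y). (K x y, K x y)) sequentially)"
proof -
  note intI = assms(1)[unfolded is_interval_1, rule_format]
  define T where "T = (\<lambda>(x::real, y::real). (M x y, N x y))"
  define F where "F n = MN_iter M N n" for n
  have F_Suc: "F (Suc n) z = T (F n z)" for n z by (simp add: F_def MN_iter_def T_def)
  have F_add: "F (k + n) z = F k (F n z)" for k n z by (simp add: F_def MN_iter_def funpow_add)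
  have F0: "F 0 z = z" for z by (simp add: F_def MN_iter_def)
  have F1: "F 1 z = T z" for z by (simp add: F_def MN_iter_def T_def)
  have TI: "T z \<in> I \<times> I" if "z \<in> I \<times> I" for z using that assms(2) by (auto simp: T_def)
  have FI: "F n z \<in> I \<times> I" if "z \<in> I \<times> I" for n z
  proof (induction n)
    case 0 then show ?case using that by (simp add: F0)
  next
    case (Suc n) then show ?case unfolding F_Suc by (rule TI)
  qed
  have Tcont: "continuous_on (I \<times> I) T"
  proof -
    have "T = (\<lambda>z. ((\<lambda>(x, y). M x y) z, (\<lambda>(x, y). N x y) z))" by (auto simp: T_def)
    then show ?thesis using continuous_on_Pair[OF assms(5) assms(6)] by simp
  qed
  have Fcont: "continuous_on (I \<times> I) (F n)" for n
  proof (induction n)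
    case 0 then show ?case by (simp add: F0 continuous_on_id)
  next
    case (Suc n)
    have "continuous_on (I \<times> I) (\<lambda>z. T (F n z))"
      by (rule continuous_on_compose2[OF Tcont Suc]) (rule image_subsetI, rule FI)
    then show ?case by (simp add: F_Suc[abs_def])
  qed
  define lo where "lo n z = min (fst (F n z)) (snd (F n z))" for n z
  define hi where "hi n z = max (fst (F n z)) (snd (F n z))" for n z
  have lo_mono: "lo n z \<le> lo (Suc n) z" and hi_mono: "hi (Suc n) z \<le> hi n z"
    if "z \<in> I \<times> I" for n z
  proof -
    obtain a b where ab: "F n z = (a, b)" by (cases "F n z")
    have "a \<in> I" "b \<in> I" using FI[OF that, of n] ab by auto
    then have "min a b \<le> M a b" "M a b \<le> max a b" "min a b \<le> N a b" "N a b \<le> max a b"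
      using assms(3,4) unfolding is_mean_def by blast+
    then show "lo n z \<le> lo (Suc n) z" "hi (Suc n) z \<le> hi n z"
      unfolding lo_def hi_def F_Suc ab T_def by simp_all
  qed
  have lohi: "lo n z \<le> hi n z" for n z by (simp add: lo_def hi_def)
  have dist_eq: "hi n z - lo n z = \<bar>fst (F n z) - snd (F n z)\<bar>" for n z
    by (auto simp: lo_def hi_def min_def max_def)
  have key: "\<exists>a. (\<lambda>n. lo n z) \<longlonglongrightarrow> a \<and> (\<lambda>n. hi n z) \<longlonglongrightarrow> a" if zI: "z \<in> I \<times> I" for z
  proof -
    have hi_le0: "hi n z \<le> hi 0 z" for n
      using lift_Suc_antimono_le[of "\<lambda>k. hi k z", OF hi_mono[OF zI]] by blast
    have lo_ge0: "lo 0 z \<le> lo n z" for n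
      using lift_Suc_mono_le[of "\<lambda>k. lo k z", OF lo_mono[OF zI]] by blast
    have "incseq (\<lambda>n. lo n z)" by (rule incseq_SucI) (rule lo_mono[OF zI])
    moreover have "\<forall>i. lo i z \<le> hi 0 z" using lohi hi_le0 order_trans by blast
    ultimately obtain a where a: "(\<lambda>n. lo n z) \<longlonglongrightarrow> a" "\<forall>i. lo i z \<le> a"
      using incseq_convergent by blast
    have "decseq (\<lambda>n. hi n z)" by (rule decseq_SucI) (rule hi_mono[OF zI])
    moreover have "\<forall>i. lo 0 z \<le> hi i z" using lohi lo_ge0 order_trans by blast
    ultimately obtain b where b: "(\<lambda>n. hi n z) \<longlonglongrightarrow> b" "\<forall>i. b \<le> hi i z"
      using decseq_convergent by blast
    define L where "L = b - a"
    have dL: "(\<lambda>n. hi n z - lo n z) \<longlonglongrightarrow> L" unfolding L_def by (intro tendsto_intros a b)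
    have dge: "L \<le> hi n z - lo n z" for n using a(2) b(2) unfolding L_def
      by (metis diff_mono)
    have "L = 0"
    proof (rule ccontr)
      assume "L \<noteq> 0"
      moreover have "0 \<le> L" by (rule LIMSEQ_le_const[OF dL]) (simp add: lohi)
      ultimately have Lpos: "L > 0" by simp
      define S where "S = {lo 0 z..hi 0 z} \<times> {lo 0 z..hi 0 z}"
      have "compact S" unfolding S_def by (intro compact_Times compact_Icc)
      have lo0I: "lo 0 z \<in> I" and hi0I: "hi 0 z \<in> I" using zI
        by (auto simp: lo_def hi_def F0 min_def max_def)
      have SI: "S \<subseteq> I \<times> I" unfolding S_def using intI[OF lo0I hi0I] by auto
      have FS: "\<forall>n. F n z \<in> S"
      proof
        fix n
        have "lo n z \<le> fst (F n z)" "fst (F n z) \<le> hi n z"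
          "lo n z \<le> snd (F n z)" "snd (F n z) \<le> hi n z" by (auto simp: lo_def hi_def)
        then show "F n z \<in> S" unfolding S_def using lo_ge0[of n] hi_le0[of n]
          by (cases "F n z") auto
      qed
      obtain l r where l: "l \<in> S" "strict_mono (r :: nat \<Rightarrow> nat)" "((\<lambda>n. F n z) \<circ> r) \<longlonglongrightarrow> l"
        using seq_compactE[OF compact_imp_seq_compact[OF \<open>compact S\<close>] FS] by blast
      have lI: "l \<in> I \<times> I" using l(1) SI by auto
      have conv: "(\<lambda>n. F (r n) z) \<longlonglongrightarrow> l" using l(3) by (simp add: comp_def)
      have "(\<lambda>n. \<bar>fst (F (r n) z) - snd (F (r n) z)\<bar>) \<longlonglongrightarrow> \<bar>fst l - snd l\<bar>"
        by (intro tendsto_intros conv)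
      moreover have "(\<lambda>n. \<bar>fst (F (r n) z) - snd (F (r n) z)\<bar>) \<longlonglongrightarrow> L"
        using LIMSEQ_subseq_LIMSEQ[OF dL l(2)] by (simp add: comp_def dist_eq)
      ultimately have lL: "\<bar>fst l - snd l\<bar> = L" using LIMSEQ_unique by blast
      then have "fst l \<noteq> snd l" using Lpos by auto
      then obtain k where k: "k > 0" "\<bar>fst (F k (fst l, snd l)) - snd (F k (fst l, snd l))\<bar> < \<bar>fst l - snd l\<bar>"
      proof -
        have "fst l \<in> I" "snd l \<in> I" using lI by (auto simp: mem_Times_iff)
        then show ?thesis using assms(7) \<open>fst l \<noteq> snd l\<close> that unfolding weakly_contractive_def F_def by blast
      qed
      have "(\<lambda>n. F k (F (r n) z)) \<longlonglongrightarrow> F k l"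
        by (rule continuous_on_tendsto_compose[OF Fcont conv lI]) (simp add: FI[OF zI])
      then have "(\<lambda>n. \<bar>fst (F k (F (r n) z)) - snd (F k (F (r n) z))\<bar>) \<longlonglongrightarrow> \<bar>fst (F k l) - snd (F k l)\<bar>"
        by (intro tendsto_intros)
      moreover have "L \<le> \<bar>fst (F k (F (r n) z)) - snd (F k (F (r n) z))\<bar>" for n
        using dge[of "k + r n"] by (simp add: dist_eq F_add)
      ultimately have "L \<le> \<bar>fst (F k l) - snd (F k l)\<bar>"
        by (intro LIMSEQ_le_const) auto
      with k(2) lL show False by simp
    qed
    then have "a = b" unfolding L_def by simp
    then show ?thesis using a b by auto
  qed
  define K where "K x y = lim (\<lambda>n. lo n (x, y))" for x y
  have Klo: "(\<lambda>n. lo n (x, y)) \<longlonglongrightarrow> K x y" and Khi: "(\<lambda>n. hi n (x, y)) \<longlonglongrightarrow> K x y"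
    if xyI: "x \<in> I" "y \<in> I" for x y
  proof -
    obtain a where "(\<lambda>n. lo n (x, y)) \<longlonglongrightarrow> a" "(\<lambda>n. hi n (x, y)) \<longlonglongrightarrow> a"
      using key[of "(x, y)"] xyI by auto
    moreover then have "K x y = a" unfolding K_def using limI by blast
    ultimately show "(\<lambda>n. lo n (x, y)) \<longlonglongrightarrow> K x y" "(\<lambda>n. hi n (x, y)) \<longlonglongrightarrow> K x y" by simp_all
  qed
  have Kbounds: "lo n (x, y) \<le> K x y \<and> K x y \<le> hi n (x, y)" if "x \<in> I" "y \<in> I" for x y n
  proof -
    have zI: "(x, y) \<in> I \<times> I" using that by auto
    have "incseq (\<lambda>n. lo n (x, y))" by (rule incseq_SucI) (rule lo_mono[OF zI])
    moreover have "decseq (\<lambda>n. hi n (x, y))" by (rule decseq_SucI) (rule hi_mono[OF zI])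
    ultimately show ?thesis using incseq_le[OF _ Klo[OF that]] decseq_ge[OF _ Khi[OF that]] by blast
  qed
  have Kmean: "is_mean I K"
    unfolding is_mean_def using Kbounds[of _ _ 0] by (auto simp: lo_def hi_def F0)
  have KI: "\<forall>x\<in>I. \<forall>y\<in>I. K x y \<in> I"
  proof (intro ballI)
    fix x y assume xy: "x \<in> I" "y \<in> I"
    have "min x y \<le> K x y" "K x y \<le> max x y" using Kmean xy unfolding is_mean_def by blast+
    moreover have "min x y \<in> I" "max x y \<in> I" using xy by (simp_all add: min_def max_def)
    ultimately show "K x y \<in> I" using intI by blast
  qed
  have Kinv: "invariant_mean I M N K"
    unfolding invariant_mean_def
  proof (intro ballI)
    fix x y assume xy: "x \<in> I" "y \<in> I"
    have TI': "M x y \<in> I" "N x y \<in> I" using assms(2) xy by auto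
    have "lo n (M x y, N x y) = lo (Suc n) (x, y)" for n
    proof -
      have "F (Suc 0) (x, y) = (M x y, N x y)" using F1[of "(x,y)"] by (simp add: T_def)
      then show ?thesis using F_add[of n 1 "(x,y)"] by (simp add: lo_def)
    qed
    then have "(\<lambda>n. lo (Suc n) (x, y)) \<longlonglongrightarrow> K (M x y) (N x y)"
      using Klo[OF TI'] by simp
    moreover have "(\<lambda>n. lo (Suc n) (x, y)) \<longlonglongrightarrow> K x y"
      using Klo[OF xy] by (rule LIMSEQ_Suc)
    ultimately show "K (M x y) (N x y) = K x y" using LIMSEQ_unique by blast
  qed
  have Kuniq: "\<forall>x\<in>I. \<forall>y\<in>I. K' x y = K x y"
    if K': "is_mean I K'" "invariant_mean I M N K'" for K'
  proof (intro ballI)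
    fix x y assume xy: "x \<in> I" "y \<in> I"
    have zI: "(x, y) \<in> I \<times> I" using xy by auto
    have inv: "K' (fst (F n (x,y))) (snd (F n (x,y))) = K' x y" for n
    proof (induction n)
      case 0 then show ?case by (simp add: F0)
    next
      case (Suc n)
      obtain a b where ab: "F n (x, y) = (a, b)" by (cases "F n (x, y)")
      have "a \<in> I" "b \<in> I" using FI[OF zI, of n] ab by auto
      then show ?case using K'(2) Suc ab unfolding invariant_mean_def
        by (simp add: F_Suc T_def)
    qed
    have bnd: "lo n (x, y) \<le> K' x y \<and> K' x y \<le> hi n (x, y)" for n
    proof -
      obtain a b where ab: "F n (x, y) = (a, b)" by (cases "F n (x, y)")
      have "a \<in> I" "b \<in> I" using FI[OF zI, of n] ab by auto
      then have "min a b \<le> K' a b \<and> K' a b \<le> max a b" using K'(1) unfolding is_mean_def by blast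
      then show ?thesis using inv[of n] ab unfolding lo_def hi_def by simp
    qed
    have "K x y \<le> K' x y" using bnd by (intro LIMSEQ_le_const2[OF Klo[OF xy]]) auto
    moreover have "K' x y \<le> K x y" using bnd by (intro LIMSEQ_le_const[OF Khi[OF xy]]) auto
    ultimately show "K' x y = K x y" by simp
  qed
  have Kunif: "uniform_limit C (\<lambda>n. MN_iter M N n) (\<lambda>(x, y). (K x y, K x y)) sequentially"
    if C: "compact C" "C \<subseteq> I \<times> I" for C
  proof (rule uniform_limitI)
    fix e :: real assume e: "e > 0"
    have dcont: "continuous_on (I \<times> I) (\<lambda>z. hi n z - lo n z)" for n
      unfolding dist_eq by (intro continuous_intros Fcont)
    have ddec: "hi (Suc n) z - lo (Suc n) z \<le> hi n z - lo n z" if "z \<in> I \<times> I" for z n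
      using lo_mono[OF that, of n] hi_mono[OF that, of n] by linarith
    have dlim: "(\<lambda>n. hi n z - lo n z) \<longlonglongrightarrow> 0" if zII: "z \<in> I \<times> I" for z
    proof -
      obtain x y where z: "z = (x, y)" "x \<in> I" "y \<in> I" using zII by auto
      show ?thesis using tendsto_diff[OF Khi[OF z(2,3)] Klo[OF z(2,3)]] z(1) by simp
    qed
    obtain N0 where N0: "\<forall>n\<ge>N0. \<forall>z\<in>C. hi n z - lo n z < e/2"
      using dini_aux[OF C dcont ddec dlim, of "e/2"] e by auto
    show "\<forall>\<^sub>F n in sequentially. \<forall>z\<in>C. dist (MN_iter M N n z) ((\<lambda>(x, y). (K x y, K x y)) z) < e"
      unfolding eventually_sequentially
    proof (intro exI allI impI ballI)
      fix n z assume n: "N0 \<le> n" and zC: "z \<in> C"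
      obtain x y where z: "z = (x, y)" "x \<in> I" "y \<in> I" using zC C by auto
      obtain a b where ab: "F n z = (a, b)" by (cases "F n z")
      have bK: "lo n z \<le> K x y" "K x y \<le> hi n z" using Kbounds[OF z(2,3), of n] z(1) by auto
      have lt: "hi n z - lo n z < e/2" using N0 n zC by auto
      have "\<bar>a - K x y\<bar> \<le> hi n z - lo n z" "\<bar>b - K x y\<bar> \<le> hi n z - lo n z"
        using bK ab unfolding lo_def hi_def by auto
      then have "sqrt ((dist a (K x y))\<^sup>2 + (dist b (K x y))\<^sup>2) < e"
        using sqrt_sum_squares_le_sum_abs[of "dist a (K x y)" "dist b (K x y)"] lt
        by (simp add: dist_real_def)
      then show "dist (MN_iter M N n z) ((\<lambda>(x, y). (K x y, K x y)) z) < e"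
        using ab z(1) by (simp add: F_def[symmetric] dist_Pair_Pair)
    qed
  qed
  show ?thesis
    using Kmean KI Kinv Kuniq Kunif by blast
qed

end
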